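(* Let $X$ be a Tychonoff $\Delta$-space and let $\varphi:X\to Y$ be a closed continuous surjection onto a Tychonoff space $Y$ all of whose fibers $\varphi^{-1}(y)$ are finite. Then $Y$ is a $\Delta$-space.
   Context: A topological space $X$ is a $\Delta$-space if for every decreasing sequence $\{D_n:n\in\omega\}$ of subsets of $X$ with $\bigcap_n D_n=\emptyset$ there is a decreasing sequence $\{V_n:n\in\omega\}$ of open subsets of $X$ with $D_n\subseteq V_n$ for all $n$ and $\bigcap_n V_n=\emptyset$. *)

theory Defs
  imports "HOL-Analysis.Analysis"
begin

definition tychonoff_space :: "'a topology \<Rightarrow> bool" where
  "tychonoff_space X \<longleftrightarrow> completely_regular_space X \<and> Hausdorff_space X"

definition delta_space :: "'a topology \<Rightarrow> bool" where
  "delta_space X \<longleftrightarrow>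
     (\<forall>D :: nat \<Rightarrow> 'a set.
        (\<forall>n. D n \<subseteq> topspace X) \<and> (\<forall>n. D (Suc n) \<subseteq> D n) \<and> (\<Inter>n. D n) = {} \<longrightarrow>
        (\<exists>V :: nat \<Rightarrow> 'a set.
           (\<forall>n. openin X (V n)) \<and> (\<forall>n. V (Suc n) \<subseteq> V n) \<and>
           (\<forall>n. D n \<subseteq> V n) \<and> (\<Inter>n. V n) = {}))"

end

theory Submission
  imports Defs
begin

theorem proposition5p3:
  fixes X :: "'a topology" and Y :: "'b topology" and \<phi> :: "'a \<Rightarrow> 'b"
  assumes "tychonoff_space X" and "delta_space X"
    and "tychonoff_space Y"
    and "continuous_map X Y \<phi>" and "closed_map X Y \<phi>"
    and "\<phi> ` topspace X = topspace Y"
    and "\<And>y. y \<in> topspace Y \<Longrightarrow> finite {x \<in> topspace X. \<phi> x = y}"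
  shows "delta_space Y"
  unfolding delta_space_def
proof (intro allI impI)
  fix D :: "nat \<Rightarrow> 'b set"
  assume H: "(\<forall>n. D n \<subseteq> topspace Y) \<and> (\<forall>n. D (Suc n) \<subseteq> D n) \<and> (\<Inter>n. D n) = {}"
  define E where "E n = {x \<in> topspace X. \<phi> x \<in> D n}" for n
  have E1: "\<forall>n. E n \<subseteq> topspace X" by (auto simp: E_def)
  have E2: "\<forall>n. E (Suc n) \<subseteq> E n" using H by (auto simp: E_def)
  have E3: "(\<Inter>n. E n) = {}" using H by (auto simp: E_def)
  obtain V where V1: "\<forall>n. openin X (V n)" and V2: "\<forall>n. V (Suc n) \<subseteq> V n"
    and V3: "\<forall>n. E n \<subseteq> V n" and V4: "(\<Inter>n. V n) = {}"
  proof -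
    have "(\<forall>n. E n \<subseteq> topspace X) \<and> (\<forall>n. E (Suc n) \<subseteq> E n) \<and> (\<Inter>n. E n) = {}"
      using E1 E2 E3 by simp
    moreover have "\<forall>D :: nat \<Rightarrow> 'a set.
        (\<forall>n. D n \<subseteq> topspace X) \<and> (\<forall>n. D (Suc n) \<subseteq> D n) \<and> (\<Inter>n. D n) = {} \<longrightarrow>
        (\<exists>V :: nat \<Rightarrow> 'a set.
           (\<forall>n. openin X (V n)) \<and> (\<forall>n. V (Suc n) \<subseteq> V n) \<and>
           (\<forall>n. D n \<subseteq> V n) \<and> (\<Inter>n. V n) = {})"
      using assms(2) unfolding delta_space_def by simp
    ultimately have "\<exists>V :: nat \<Rightarrow> 'a set.
           (\<forall>n. openin X (V n)) \<and> (\<forall>n. V (Suc n) \<subseteq> V n) \<and>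
           (\<forall>n. E n \<subseteq> V n) \<and> (\<Inter>n. V n) = {}" by (rule mp[OF spec[where x=E], rotated])
    then show ?thesis using that by blast
  qed
  define W where "W n = topspace Y - \<phi> ` (topspace X - V n)" for n
  show "\<exists>V :: nat \<Rightarrow> 'b set.
           (\<forall>n. openin Y (V n)) \<and> (\<forall>n. V (Suc n) \<subseteq> V n) \<and>
           (\<forall>n. D n \<subseteq> V n) \<and> (\<Inter>n. V n) = {}"
  proof (intro exI[of _ W] conjI allI)
    fix n
    have "closedin X (topspace X - V n)" using V1 by auto
    then have "closedin Y (\<phi> ` (topspace X - V n))"
      using assms(5) unfolding closed_map_def by blast
    then show "openin Y (W n)" unfolding W_def by auto
  next
    fix n show "W (Suc n) \<subseteq> W n" using V2 unfolding W_def by auto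
  next
    fix n show "D n \<subseteq> W n"
    proof
      fix y assume y: "y \<in> D n"
      then have "y \<in> topspace Y" using H by blast
      moreover have "y \<notin> \<phi> ` (topspace X - V n)"
      proof
        assume "y \<in> \<phi> ` (topspace X - V n)"
        then obtain x where "x \<in> topspace X" "x \<notin> V n" "\<phi> x = y" by blast
        then show False using y V3 by (auto simp: E_def)
      qed
      ultimately show "y \<in> W n" unfolding W_def by blast
    qed
  next
    show "(\<Inter>n. W n) = {}"
    proof (rule ccontr)
      assume "(\<Inter>n. W n) \<noteq> {}"
      then obtain y where y: "\<And>n. y \<in> W n" by blast
      have "y \<in> topspace Y" using y[of 0] unfolding W_def by simp
      then have "y \<in> \<phi> ` topspace X" using assms(6) by simp
      then obtain x where x: "x \<in> topspace X" "\<phi> x = y" by (auto simp: image_iff)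
      have "x \<in> V n" for n using y[of n] x unfolding W_def by auto
      then show False using V4 by blast
    qed
  qed
qed

end
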